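(* Let $A$ be as in Construction 1. For any $\delta\in(0,1)$ such that \[ 2\alpha^2+8T\log\!\left(\frac{2Tn}{\delta}\right)\beta^2\le 1, \] with probability at least $1-\delta$ (over $\boldsymbol{\xi}_1,\dots,\boldsymbol{\xi}_T$) it holds that $\max_{l\in[n]}\|A_l\|_2\le1$, where $A_l$ is the $l$-th row of $A$.
   Context: Construction 1: Fix an integer $T\ge1$ with $n\ge 2T+1$ and $d\ge 2T+2$, parameters $\alpha,\beta>0$, and a deterministic algorithm interacting with the two-sided oracle (on query $(\mathbf{p},\mathbf{w})\in\mathbb{R}^n\times\mathbb{R}^d$ it returns $A\mathbf{w}$ and $\mathbf{p}^\top A$); queries and the final output $\mathbf{w}_{T+1}$ are deterministic functions of previous responses. Let $\boldsymbol{\xi}_1,\dots,\boldsymbol{\xi}_T$ be i.i.d. standard Gaussian vectors in $\mathbb{R}^n$. Set $\mathbf{v}_0=\alpha\mathbf{1}$. For $t=1,\dots,T$: let $(\mathbf{p}_t,\mathbf{w}_t)$ be the algorithm's query; let $\mathbf{u}_t\in\mathbb{R}^d$ be a unit vector orthogonal to $\mathbf{u}_1,\dots,\mathbf{u}_{t-1},\mathbf{w}_1,\dots,\mathbf{w}_t$; let $\mathbf{v}_t=\beta(I-M_tM_t^\top)\boldsymbol{\xi}_t$ where $M_t$ has at most $2t$ orthonormal columns spanning $\mathrm{span}(\mathbf{v}_0,\dots,\mathbf{v}_{t-1},\mathbf{p}_1,\dots,\mathbf{p}_t)$; let $A_t=\sum_{j=1}^t(\mathbf{v}_{j-1}-\mathbf{v}_j)\mathbf{u}_j^\top$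 and feed the algorithm $\mathbf{p}_t^\top A_t$, $A_t\mathbf{w}_t$. After round $T$, let $\mathbf{w}_{T+1}$ be the output and $\mathbf{u}_{T+1}$ a unit vector orthogonal to $\mathbf{u}_1,\dots,\mathbf{u}_T,\mathbf{w}_1,\dots,\mathbf{w}_{T+1}$. Define $A=\sum_{j=1}^T(\mathbf{v}_{j-1}-\mathbf{v}_j)\mathbf{u}_j^\top+\mathbf{v}_T\mathbf{u}_{T+1}^\top$. *)

theory Defs
  imports "HOL-Probability.Probability"
begin

definition std_gauss :: "('a::euclidean_space) measure" where
  "std_gauss = density lborel
     (\<lambda>x. ennreal ((2 * pi) powr (- real DIM('a) / 2) * exp (- (norm x)\<^sup>2 / 2)))"

definition outer :: "real^'n \<Rightarrow> real^'d \<Rightarrow> real^'d^'n" where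
  "outer v u = (\<chi> l k. v $ l * u $ k)"

text \<open>(I - M M^T) x, where M has columns given by the list ms.\<close>
definition proj_out :: "(real^'n) list \<Rightarrow> real^'n \<Rightarrow> real^'n" where
  "proj_out ms x = x - sum_list (map (\<lambda>m. (m \<bullet> x) *\<^sub>R m) ms)"

definition orthonormal_list :: "('a::real_inner) list \<Rightarrow> bool" where
  "orthonormal_list ms \<longleftrightarrow>
     (\<forall>i<length ms. \<forall>j<length ms. ms ! i \<bullet> ms ! j = (if i = j then 1 else 0))"

text \<open>A_t = sum_{j=1}^t (v_{j-1} - v_j) u_j^T, with vs = [v_0,...,v_t], us = [u_1,...,u_t].\<close>
definition Apart :: "(real^'n) list \<Rightarrow> (real^'d) list \<Rightarrow> nat \<Rightarrow> real^'d^'n" where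
  "Apart vs us t = (\<Sum>j\<in>{1..t}. outer (vs ! (j - 1) - vs ! j) (us ! (j - 1)))"

text \<open>State of Construction 1 after round t:
  us = [u_1..u_t], vs = [v_0..v_t], ps = [p_1..p_t], ws = [w_1..w_t],
  resp = [(p_1^T A_1, A_1 w_1), ..., (p_t^T A_t, A_t w_t)].\<close>
record ('n, 'd) cstate =
  cs_us :: "(real^'d) list"
  cs_vs :: "(real^'n) list"
  cs_ps :: "(real^'n) list"
  cs_ws :: "(real^'d) list"
  cs_resp :: "((real^'d) \<times> (real^'n)) list"

text \<open>Q: the deterministic algorithm's query as a function of the previous responses;
  Usel: the rule choosing u_t; Msel: the rule choosing the orthonormal columns of M_t;
  xi t: the Gaussian vector xi_t (t = 1..T).\<close>
primrec crun ::
  "(((real^'d) \<times> (real^'n)) list \<Rightarrow> (real^'n) \<times> (real^'d)) \<Rightarrow>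
   ((real^'d) list \<Rightarrow> real^'d) \<Rightarrow> ((real^'n) list \<Rightarrow> (real^'n) list) \<Rightarrow>
   real \<Rightarrow> real \<Rightarrow> (nat \<Rightarrow> real^'n) \<Rightarrow> nat \<Rightarrow> ('n, 'd) cstate" where
  "crun Q Usel Msel \<alpha> \<beta> xi 0 =
     \<lparr> cs_us = [], cs_vs = [\<alpha> *\<^sub>R 1], cs_ps = [], cs_ws = [], cs_resp = [] \<rparr>"
| "crun Q Usel Msel \<alpha> \<beta> xi (Suc t) =
     (let s = crun Q Usel Msel \<alpha> \<beta> xi t;
          p = fst (Q (cs_resp s));
          w = snd (Q (cs_resp s));
          u = Usel (cs_us s @ cs_ws s @ [w]);
          M = Msel (cs_vs s @ cs_ps s @ [p]);
          v = \<beta> *\<^sub>R proj_out M (xi (Suc t));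
          us' = cs_us s @ [u];
          vs' = cs_vs s @ [v];
          At = Apart vs' us' (Suc t)
      in \<lparr> cs_us = us', cs_vs = vs', cs_ps = cs_ps s @ [p], cs_ws = cs_ws s @ [w],
           cs_resp = cs_resp s @ [(p v* At, At *v w)] \<rparr>)"

text \<open>The final matrix A = sum_{j=1}^T (v_{j-1} - v_j) u_j^T + v_T u_{T+1}^T,
  where Out is the algorithm's output map (giving w_{T+1}).\<close>
definition final_A ::
  "(((real^'d) \<times> (real^'n)) list \<Rightarrow> (real^'n) \<times> (real^'d)) \<Rightarrow>
   (((real^'d) \<times> (real^'n)) list \<Rightarrow> real^'d) \<Rightarrow>
   ((real^'d) list \<Rightarrow> real^'d) \<Rightarrow> ((real^'n) list \<Rightarrow> (real^'n) list) \<Rightarrow>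
   real \<Rightarrow> real \<Rightarrow> nat \<Rightarrow> (nat \<Rightarrow> real^'n) \<Rightarrow> real^'d^'n" where
  "final_A Q Out Usel Msel \<alpha> \<beta> T xi =
     (let s = crun Q Usel Msel \<alpha> \<beta> xi T;
          w = Out (cs_resp s);
          u = Usel (cs_us s @ cs_ws s @ [w])
      in Apart (cs_vs s) (cs_us s) T + outer (cs_vs s ! T) u)"

end

theory Submission
  imports Defs
begin



lemma norm_sq_basis: "(norm (x::'a::euclidean_space))\<^sup>2 = (\<Sum>b\<in>Basis. (x \<bullet> b)^2)"
proof -
  have "x \<bullet> x = (\<Sum>b\<in>Basis. (x \<bullet> b) * (x \<bullet> b))" by (rule euclidean_inner)
  then show ?thesis unfolding power2_norm_eq_inner by (simp add: power2_eq_square)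
qed
lemma pw: "(1 / sqrt (2 * pi)) ^ n = (2 * pi) powr (- real n / 2)"
proof -
  have p: "(2 * pi::real) > 0" by simp
  have "(1 / sqrt (2 * pi)) ^ n = inverse (sqrt (2 * pi) ^ n)"
    by (simp add: power_inverse divide_inverse)
  also have "sqrt (2 * pi) ^ n = ((2 * pi) powr (1/2)) powr real n"
    by (simp add: powr_half_sqrt[OF less_imp_le[OF p]] powr_realpow)
  also have "\<dots> = (2 * pi) powr (real n / 2)"
    by (simp add: powr_powr)
  also have "inverse \<dots> = (2 * pi) powr (- (real n / 2))"
    by (rule powr_minus[symmetric])
  finally show ?thesis by simp
qed
definition gdens :: "'a::euclidean_space \<Rightarrow> real" where
  "gdens x = (2 * pi) powr (- real DIM('a) / 2) * exp (- (norm x)\<^sup>2 / 2)"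

lemma gdens_prod: "gdens (x::'a::euclidean_space) = (\<Prod>b\<in>Basis. std_normal_density (x \<bullet> b))"
proof -
  have "(\<Prod>b\<in>Basis. std_normal_density (x \<bullet> b)) = (\<Prod>b\<in>(Basis::'a set). (1 / sqrt (2 * pi)) * exp (- (x\<bullet>b)\<^sup>2 / 2))"
    by (simp add: std_normal_density_def)
  also have "\<dots> = (1 / sqrt (2 * pi)) ^ DIM('a) * exp (\<Sum>b\<in>(Basis::'a set). - (x\<bullet>b)\<^sup>2 / 2)"
    unfolding prod.distrib prod_constant by (simp add: exp_sum)
  also have "(\<Sum>b\<in>(Basis::'a set). - (x\<bullet>b)\<^sup>2 / 2) = - (norm x)\<^sup>2 / 2"
    by (simp add: norm_sq_basis sum_negf sum_divide_distrib)
  also have "(1 / sqrt (2 * pi)) ^ DIM('a) = (2 * pi) powr (- real DIM('a) / 2)"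
    by (rule pw)
  finally show ?thesis by (simp add: gdens_def)
qed

lemma gdens_meas[measurable]: "gdens \<in> borel_measurable borel"
  unfolding gdens_def by measurable

lemma gdens_nonneg: "gdens x \<ge> 0" by (simp add: gdens_def)

lemma sum_basis_inner: "b \<in> Basis \<Longrightarrow> (\<Sum>b'\<in>Basis. f b' *\<^sub>R b' :: 'a::euclidean_space) \<bullet> b = f b"
proof -
  assume b: "b \<in> Basis"
  have "(\<Sum>b'\<in>Basis. f b' *\<^sub>R b' :: 'a) \<bullet> b = (\<Sum>b'\<in>Basis. if b' = b then f b' else 0)"
    unfolding inner_sum_left by (intro sum.cong) (auto simp: inner_Basis b)
  also have "\<dots> = f b" using b by simp
  finally show ?thesis .
qed

lemma gdens_int: "(\<integral>\<^sup>+ x. ennreal (gdens (x::'a::euclidean_space)) \<partial>lborel) = 1"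
proof -
  interpret product_sigma_finite "\<lambda>_::'a. (lborel::real measure)" by standard
  have "(\<integral>\<^sup>+ x. ennreal (gdens (x::'a)) \<partial>lborel)
     = (\<integral>\<^sup>+ f. ennreal (gdens (\<Sum>b\<in>Basis. f b *\<^sub>R b :: 'a)) \<partial>(\<Pi>\<^sub>M b\<in>Basis. lborel))"
    by (subst lborel_eq) (simp add: nn_integral_distr)
  also have "\<dots> = (\<integral>\<^sup>+ f. (\<Prod>b\<in>(Basis::'a set). ennreal (std_normal_density (f b))) \<partial>(\<Pi>\<^sub>M b\<in>Basis. lborel))"
  proof (intro nn_integral_cong)
    fix f :: "'a \<Rightarrow> real"
    have "gdens (\<Sum>b\<in>Basis. f b *\<^sub>R b :: 'a) = (\<Prod>b\<in>(Basis::'a set). std_normal_density (f b))"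
      unfolding gdens_prod by (intro prod.cong) (auto simp: sum_basis_inner)
    then show "ennreal (gdens (\<Sum>b\<in>Basis. f b *\<^sub>R b :: 'a)) = (\<Prod>b\<in>(Basis::'a set). ennreal (std_normal_density (f b)))"
      by (simp add: prod_ennreal)
  qed
  also have "\<dots> = (\<Prod>b\<in>(Basis::'a set). \<integral>\<^sup>+ y. ennreal (std_normal_density y) \<partial>lborel)"
    by (rule product_nn_integral_prod) auto
  also have "(\<integral>\<^sup>+ y. ennreal (std_normal_density y) \<partial>lborel) = 1"
    by (subst nn_integral_eq_integral) auto
  finally show ?thesis by simp
qed

lemma std_gauss_eq: "std_gauss = density lborel (\<lambda>x. ennreal (gdens x))"
  by (simp add: std_gauss_def gdens_def)

lemma space_std_gauss[simp]: "space std_gauss = UNIV"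
  by (simp add: std_gauss_def)

lemma sets_std_gauss[simp]: "sets std_gauss = sets borel"
  by (simp add: std_gauss_def)

declare sets_std_gauss[measurable_cong]

lemma prob_space_std_gauss: "prob_space (std_gauss :: 'a::euclidean_space measure)"
  by (rule prob_spaceI) (simp add: std_gauss_eq emeasure_density gdens_int)

lemma gauss_mgf:
  fixes c :: "'a::euclidean_space"
  shows "(\<integral>\<^sup>+ x. ennreal (exp (c \<bullet> x)) \<partial>std_gauss) = ennreal (exp ((norm c)\<^sup>2 / 2))"
proof -
  have eq: "gdens x * exp (c \<bullet> x) = exp ((norm c)\<^sup>2 / 2) * gdens (- c + x)" for x
  proof -
    have "(norm (- c + x))\<^sup>2 = (norm x)\<^sup>2 - 2 * (c \<bullet> x) + (norm c)\<^sup>2"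
      by (simp add: power2_norm_eq_inner inner_simps inner_commute)
    then have "c \<bullet> x + - (norm x)\<^sup>2 / 2 = (norm c)\<^sup>2 / 2 + - (norm (- c + x))\<^sup>2 / 2" by (simp add: field_simps)
    then have "exp (- (norm x)\<^sup>2 / 2) * exp (c \<bullet> x) = exp ((norm c)\<^sup>2 / 2) * exp (- (norm (- c + x))\<^sup>2 / 2)"
      by (simp only: mult_exp_exp) (simp add: algebra_simps)
    then show ?thesis
      by (simp add: gdens_def)
  qed
  have "(\<integral>\<^sup>+ x. ennreal (exp (c \<bullet> x)) \<partial>std_gauss) = (\<integral>\<^sup>+ x. ennreal (gdens x * exp (c \<bullet> x)) \<partial>lborel)"
    by (simp add: std_gauss_eq nn_integral_density ennreal_mult'[symmetric] gdens_nonneg)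
  also have "\<dots> = (\<integral>\<^sup>+ x. ennreal (exp ((norm c)\<^sup>2 / 2)) * ennreal (gdens (- c + x)) \<partial>lborel)"
    by (simp add: eq ennreal_mult')
  also have "\<dots> = ennreal (exp ((norm c)\<^sup>2 / 2)) * (\<integral>\<^sup>+ x. ennreal (gdens (- c + x)) \<partial>lborel)"
    by (subst nn_integral_cmult) auto
  also have "(\<integral>\<^sup>+ x. ennreal (gdens (- c + x)) \<partial>lborel) = (\<integral>\<^sup>+ x. ennreal (gdens x) \<partial>distr lborel borel ((+) (-c)))"
    by (subst nn_integral_distr) auto
  also have "\<dots> = 1" by (simp add: lborel_distr_plus gdens_int)
  finally show ?thesis by simp
qed

lemma gauss_tail:
  fixes c :: "'a::euclidean_space"
  assumes "norm c \<le> 1" "r \<ge> 0"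
  shows "emeasure std_gauss {x. r \<le> c \<bullet> x} \<le> ennreal (exp (- r\<^sup>2 / 2))"
proof -
  have "emeasure std_gauss {x. r \<le> c \<bullet> x} = (\<integral>\<^sup>+ x. indicator {x. r \<le> c \<bullet> x} x \<partial>std_gauss)"
    by (subst nn_integral_indicator) auto
  also have "\<dots> \<le> (\<integral>\<^sup>+ x. ennreal (exp (- r\<^sup>2)) * ennreal (exp ((r *\<^sub>R c) \<bullet> x)) \<partial>std_gauss)"
  proof (intro nn_integral_mono)
    fix x
    show "indicator {x. r \<le> c \<bullet> x} x \<le> ennreal (exp (- r\<^sup>2)) * ennreal (exp ((r *\<^sub>R c) \<bullet> x))"
    proof (cases "r \<le> c \<bullet> x")
      case True
      have "r * r \<le> r * (c \<bullet> x)" using True assms by (intro mult_left_mono) auto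
      hence "1 \<le> exp (- r\<^sup>2) * exp ((r *\<^sub>R c) \<bullet> x)"
        by (simp add: mult_exp_exp power2_eq_square)
      then show ?thesis using True by (simp add: ennreal_mult'[symmetric])
    qed simp
  qed
  also have "\<dots> = ennreal (exp (- r\<^sup>2)) * ennreal (exp ((norm (r *\<^sub>R c))\<^sup>2 / 2))"
    by (subst nn_integral_cmult) (simp_all only: gauss_mgf, measurable)
  also have "\<dots> \<le> ennreal (exp (- r\<^sup>2 / 2))"
  proof -
    have "(norm (r *\<^sub>R c))\<^sup>2 \<le> r\<^sup>2"
    proof -
      have "\<bar>r\<bar> * norm c \<le> \<bar>r\<bar>" using assms by (simp add: mult_left_le)
      then have "(\<bar>r\<bar> * norm c)\<^sup>2 \<le> \<bar>r\<bar>\<^sup>2" by (intro power_mono) auto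
      then show ?thesis by simp
    qed
    hence "exp (- r\<^sup>2) * exp ((norm (r *\<^sub>R c))\<^sup>2 / 2) \<le> exp (- r\<^sup>2 / 2)"
      by (simp add: mult_exp_exp)
    then show ?thesis by (simp add: ennreal_mult'[symmetric])
  qed
  finally show ?thesis .
qed


lemma crun_lengths:
  "length (cs_us (crun Q Usel Msel a b xi t)) = t \<and> length (cs_vs (crun Q Usel Msel a b xi t)) = Suc t
   \<and> length (cs_ws (crun Q Usel Msel a b xi t)) = t \<and> length (cs_ps (crun Q Usel Msel a b xi t)) = t"
  by (induction t) (simp_all add: Let_def)

lemma crun_vs_prefix:
  "k \<le> t \<Longrightarrow> cs_vs (crun Q Usel Msel a b xi t) ! k = cs_vs (crun Q Usel Msel a b xi k) ! k"
proof (induction t)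
  case 0 then show ?case by simp
next
  case (Suc t)
  show ?case
  proof (cases "k = Suc t")
    case False
    then have "k \<le> t" using Suc.prems by simp
    then show ?thesis using Suc.IH crun_lengths[of Q Usel Msel a b xi t]
      by (simp add: Let_def nth_append)
  qed simp
qed

lemma crun_cong:
  "(\<And>j. j \<in> {1..t} \<Longrightarrow> xi j = xi' j) \<Longrightarrow> crun Q Usel Msel a b xi t = crun Q Usel Msel a b xi' t"
proof (induction t)
  case 0 then show ?case by simp
next
  case (Suc t)
  then have "crun Q Usel Msel a b xi t = crun Q Usel Msel a b xi' t" by auto
  moreover have "xi (Suc t) = xi' (Suc t)" using Suc.prems by auto
  ultimately show ?case by (simp add: Let_def)
qed

lemma crun_v_Suc:
  "cs_vs (crun Q Usel Msel a b xi (Suc t)) ! Suc t =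
     b *\<^sub>R proj_out (Msel (cs_vs (crun Q Usel Msel a b xi t) @ cs_ps (crun Q Usel Msel a b xi t)
        @ [fst (Q (cs_resp (crun Q Usel Msel a b xi t)))])) (xi (Suc t))"
  using crun_lengths[of Q Usel Msel a b xi t] by (simp add: Let_def nth_append)

lemma crun_v0: "cs_vs (crun Q Usel Msel a b xi 0) ! 0 = a *\<^sub>R 1" by simp

lemma orthonormal_snoc:
  assumes "orthonormal_list L" "norm u = 1" "\<forall>x\<in>set L. x \<bullet> u = 0"
  shows "orthonormal_list (L @ [u])"
  unfolding orthonormal_list_def
proof (intro allI impI)
  fix i j assume i: "i < length (L @ [u])" and j: "j < length (L @ [u])"
  have uu: "u \<bullet> u = 1" using assms(2) by (metis norm_eq_sqrt_inner real_sqrt_eq_1_iff)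
  show "(L @ [u]) ! i \<bullet> (L @ [u]) ! j = (if i = j then 1 else 0)"
  proof (cases "i < length L"; cases "j < length L")
    assume "i < length L" "j < length L"
    then show ?thesis using assms(1) by (simp add: nth_append orthonormal_list_def)
  next
    assume "i < length L" "\<not> j < length L"
    then show ?thesis using j assms(3) by (auto simp: nth_append)
  next
    assume "\<not> i < length L" "j < length L"
    then show ?thesis using i assms(3) by (auto simp: nth_append inner_commute)
  next
    assume "\<not> i < length L" "\<not> j < length L"
    then show ?thesis using i j uu by (auto simp: nth_append)
  qed
qed

lemma crun_us_orth:
  assumes Usel: "\<And>L. length L < CARD('d) \<Longrightarrow> norm (Usel L) = 1 \<and> (\<forall>x\<in>set L. x \<bullet> Usel L = 0)"
    and "2 * t \<le> CARD('d)"
  shows "orthonormal_list (cs_us (crun Q Usel Msel a b xi t) :: (real^'d) list)"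
  using assms(2)
proof (induction t)
  case 0 then show ?case by (simp add: orthonormal_list_def)
next
  case (Suc t)
  let ?s = "crun Q Usel Msel a b xi t"
  let ?L = "cs_us ?s @ cs_ws ?s @ [snd (Q (cs_resp ?s))]"
  have "length ?L < CARD('d)" using Suc.prems crun_lengths[of Q Usel Msel a b xi t] by simp
  then have "norm (Usel ?L) = 1 \<and> (\<forall>x\<in>set ?L. x \<bullet> Usel ?L = 0)" by (rule Usel)
  then have "orthonormal_list (cs_us ?s @ [Usel ?L])"
    using Suc by (intro orthonormal_snoc) auto
  then show ?case by (simp add: Let_def)
qed

lemma sum_shift1: "(\<Sum>j\<in>{1..T}. g j) = (\<Sum>j<T. g (Suc j) :: 'a::comm_monoid_add)"
  by (induction T) (simp_all add: atLeastAtMostSuc_conv add.commute)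

lemma norm_orth_sum:
  assumes "orthonormal_list E" "length E = m"
  shows "(norm (\<Sum>j<m. c j *\<^sub>R E ! j))\<^sup>2 = (\<Sum>j<m. (c j)\<^sup>2)"
proof -
  have "(norm (\<Sum>j<m. c j *\<^sub>R E ! j))\<^sup>2 = (\<Sum>i<m. \<Sum>j<m. c i * c j * (E ! j \<bullet> E ! i))"
    by (simp add: power2_norm_eq_inner inner_sum_left inner_sum_right sum_distrib_left mult.assoc)
  also have "\<dots> = (\<Sum>i<m. \<Sum>j<m. if j = i then c i * c i else 0)"
    using assms by (intro sum.cong refl) (auto simp: orthonormal_list_def)
  also have "\<dots> = (\<Sum>j<m. (c j)\<^sup>2)" by (simp add: power2_eq_square)
  finally show ?thesis .
qed

lemma diff_sq_bound:
  "(\<Sum>j<T. (a j - a (Suc j))\<^sup>2) + (a T)\<^sup>2 + (a T)\<^sup>2 \<le> 2 * (a 0)\<^sup>2 + 4 * (\<Sum>j\<in>{1..T}. (a j :: real)\<^sup>2)"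
proof (induction T)
  case 0 then show ?case by simp
next
  case (Suc T)
  have "(a T - a (Suc T))\<^sup>2 \<le> 2 * (a T)\<^sup>2 + 2 * (a (Suc T))\<^sup>2"
  proof -
    have h: "0 \<le> (a T + a (Suc T))\<^sup>2" by simp
    show ?thesis using h unfolding power2_eq_square by (simp add: algebra_simps)
  qed
  then show ?case using Suc by (simp add: atLeastAtMostSuc_conv)
qed



lemma proj_inner:
  "proj_out ms x \<bullet> z = x \<bullet> z - sum_list (map (\<lambda>m. (m \<bullet> x) * (m \<bullet> z)) ms)"
  unfolding proj_out_def
  by (induction ms) (simp_all add: inner_diff_left inner_add_left algebra_simps)

lemma proj_sym: "proj_out ms x \<bullet> z = x \<bullet> proj_out ms z"
proof -
  have "x \<bullet> proj_out ms z = proj_out ms z \<bullet> x" by (rule inner_commute)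
  also have "\<dots> = z \<bullet> x - sum_list (map (\<lambda>m. (m \<bullet> z) * (m \<bullet> x)) ms)" by (rule proj_inner)
  also have "\<dots> = proj_out ms x \<bullet> z"
    by (simp only: proj_inner inner_commute[of z x] mult.commute[of "_ \<bullet> z"])
  finally show ?thesis by simp
qed

lemma proj_orth:
  assumes "orthonormal_list ms" "m \<in> set ms"
  shows "m \<bullet> proj_out ms x = 0"
proof -
  obtain k where k: "k < length ms" "m = ms ! k" using assms(2) by (auto simp: in_set_conv_nth)
  have "sum_list (map (\<lambda>m'. (m' \<bullet> x) * (m' \<bullet> m)) ms) = (\<Sum>i<length ms. (ms ! i \<bullet> x) * (ms ! i \<bullet> ms ! k))"
    by (simp add: sum_list_sum_nth atLeast0LessThan k(2))
  also have "\<dots> = (\<Sum>i<length ms. if i = k then ms ! k \<bullet> x else 0)"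
    using assms(1) k by (intro sum.cong refl) (auto simp: orthonormal_list_def)
  also have "\<dots> = m \<bullet> x" using k by simp
  finally have S: "sum_list (map (\<lambda>m'. (m' \<bullet> x) * (m' \<bullet> m)) ms) = m \<bullet> x" .
  have "m \<bullet> proj_out ms x = proj_out ms x \<bullet> m" by (rule inner_commute)
  also have "\<dots> = x \<bullet> m - sum_list (map (\<lambda>m'. (m' \<bullet> x) * (m' \<bullet> m)) ms)" by (rule proj_inner)
  also have "x \<bullet> m = m \<bullet> x" by (rule inner_commute)
  finally show ?thesis using S by simp
qed

lemma proj_norm:
  assumes "orthonormal_list ms"
  shows "norm (proj_out ms x) \<le> norm x"
proof -
  let ?c = "proj_out ms x"
  have "?c \<bullet> ?c = x \<bullet> ?c - sum_list (map (\<lambda>m. (m \<bullet> x) * (m \<bullet> ?c)) ms)"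
    by (rule proj_inner)
  also have "sum_list (map (\<lambda>m. (m \<bullet> x) * (m \<bullet> ?c)) ms) = sum_list (map (\<lambda>m. 0) ms)"
    using proj_orth[OF assms] by (intro arg_cong[where f=sum_list] map_cong) auto
  also have "x \<bullet> ?c = x \<bullet> x - sum_list (map (\<lambda>m. (m \<bullet> x) * (m \<bullet> x)) ms)"
    by (simp add: proj_sym[symmetric] proj_inner)
  also have "sum_list (map (\<lambda>m. (m \<bullet> x) * (m \<bullet> x)) ms) \<ge> 0"
    by (intro sum_list_nonneg) auto
  ultimately have "?c \<bullet> ?c \<le> x \<bullet> x" by simp
  then show ?thesis by (simp add: norm_eq_sqrt_inner)
qed

lemma proj_comp: "proj_out ms y $ l = proj_out ms (axis l 1) \<bullet> y"
proof -
  have "proj_out ms y $ l = proj_out ms y \<bullet> axis l 1" by (simp add: inner_axis)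
  also have "\<dots> = y \<bullet> proj_out ms (axis l 1)" by (rule proj_sym)
  also have "\<dots> = proj_out ms (axis l 1) \<bullet> y" by (rule inner_commute)
  finally show ?thesis .
qed



lemma vec_nth_meas[measurable]: "(\<lambda>x::real^'n. x $ l) \<in> borel_measurable borel"
  by (intro borel_measurable_continuous_onI continuous_intros)

lemma tail_step:
  fixes Q :: "((real^'d) \<times> (real^'n)) list \<Rightarrow> (real^'n) \<times> (real^'d)"
    and Usel :: "(real^'d) list \<Rightarrow> real^'d"
    and Msel :: "(real^'n) list \<Rightarrow> (real^'n) list"
  assumes t: "t \<in> {1..T}" and Msel: "\<And>L. orthonormal_list (Msel L)"
    and meas_t: "(\<lambda>xi. cs_vs (crun Q Usel Msel a b xi t) ! t)
                   \<in> borel_measurable (PiM {1..T} (\<lambda>_. std_gauss :: (real^'n) measure))"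
    and b: "b > 0" and r: "r \<ge> 0"
  shows "emeasure (PiM {1..T} (\<lambda>_. std_gauss :: (real^'n) measure))
     {xi \<in> space (PiM {1..T} (\<lambda>_. std_gauss :: (real^'n) measure)).
        b * r \<le> \<bar>cs_vs (crun Q Usel Msel a b xi t) ! t $ l\<bar>} \<le> ennreal (2 * exp (- r\<^sup>2 / 2))"
proof -
  let ?G = "std_gauss :: (real^'n) measure"
  interpret G: prob_space ?G by (rule prob_space_std_gauss)
  interpret PS: product_sigma_finite "\<lambda>_::nat. ?G"
    by (simp add: product_sigma_finite_def G.sigma_finite_measure_axioms)
  obtain t' where t': "t = Suc t'" using t by (cases t) auto
  define I where "I = {1..T} - {t}"
  have eq: "{1..T} = insert t I" and fI: "finite I" and tI: "t \<notin> I" using t by (auto simp: I_def)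
  define N where "N = PiM {1..T} (\<lambda>_. ?G)"
  define V where "V xi = cs_vs (crun Q Usel Msel a b xi t) ! t" for xi
  define B where "B = {xi \<in> space N. b * r \<le> \<bar>V xi $ l\<bar>}"
  have [measurable]: "V \<in> borel_measurable N" using meas_t by (simp add: V_def[abs_def] N_def)
  have Bm: "B \<in> sets N" unfolding B_def by measurable
  have "emeasure N B = (\<integral>\<^sup>+ x. indicator B x \<partial>N)" using Bm by simp
  also have "\<dots> = (\<integral>\<^sup>+ x. \<integral>\<^sup>+ y. indicator B (x(t := y)) \<partial>?G \<partial>PiM I (\<lambda>_. ?G))"
  proof -
    have "indicator B \<in> borel_measurable (PiM (insert t I) (\<lambda>_. ?G))"
      using Bm by (simp add: N_def eq[symmetric])
    then show ?thesis unfolding N_def eq by (rule PS.product_nn_integral_insert[OF fI tI])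
  qed
  also have "\<dots> \<le> (\<integral>\<^sup>+ x. ennreal (2 * exp (- r\<^sup>2 / 2)) \<partial>PiM I (\<lambda>_. ?G))"
  proof (intro nn_integral_mono)
    fix x assume x: "x \<in> space (PiM I (\<lambda>_. ?G))"
    define M where "M = Msel (cs_vs (crun Q Usel Msel a b x t') @ cs_ps (crun Q Usel Msel a b x t')
        @ [fst (Q (cs_resp (crun Q Usel Msel a b x t')))])"
    define c where "c = proj_out M (axis l 1)"
    have nc: "norm c \<le> 1" unfolding c_def using proj_norm[OF Msel[of "_"], of _ "axis l (1::real)"]
      by (metis M_def norm_axis_1)
    have ind: "indicator B (x(t := y)) \<le> (indicator ({y. r \<le> c \<bullet> y} \<union> {y. r \<le> (- c) \<bullet> y}) y :: ennreal)" for y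
    proof -
      have sp: "x(t := y) \<in> space N" using x unfolding N_def eq by (simp add: space_PiM PiE_fun_upd)
      have cr: "crun Q Usel Msel a b (x(t := y)) t' = crun Q Usel Msel a b x t'"
        by (rule crun_cong) (auto simp: t')
      have "V (x(t := y)) $ l = b * (c \<bullet> y)"
        using cr unfolding V_def t' crun_v_Suc by (simp add: M_def c_def proj_comp)
      moreover have "b * r \<le> \<bar>b * z\<bar> \<Longrightarrow> r \<le> z \<or> r \<le> - z" for z
      proof -
        assume "b * r \<le> \<bar>b * z\<bar>"
        then have "b * r \<le> b * \<bar>z\<bar>" using b by (simp add: abs_mult)
        then have "r \<le> \<bar>z\<bar>" using b by (simp add: mult_le_cancel_left_pos)
        then show ?thesis by (auto simp: abs_if split: if_splits)
      qed
      ultimately show ?thesis using sp by (auto simp: B_def indicator_def inner_minus_left)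
    qed
    have "(\<integral>\<^sup>+ y. indicator B (x(t := y)) \<partial>?G) \<le> (\<integral>\<^sup>+ y. indicator ({y. r \<le> c \<bullet> y} \<union> {y. r \<le> (- c) \<bullet> y}) y \<partial>?G)"
      by (intro nn_integral_mono ind)
    also have "\<dots> = emeasure ?G ({y. r \<le> c \<bullet> y} \<union> {y. r \<le> (- c) \<bullet> y})"
      by (subst nn_integral_indicator) (auto intro: sets.Un)
    also have "\<dots> \<le> emeasure ?G {y. r \<le> c \<bullet> y} + emeasure ?G {y. r \<le> (- c) \<bullet> y}"
      by (intro emeasure_subadditive) auto
    also have "\<dots> \<le> ennreal (exp (- r\<^sup>2 / 2)) + ennreal (exp (- r\<^sup>2 / 2))"
      using nc r by (intro add_mono gauss_tail) auto
    also have "\<dots> = ennreal (2 * exp (- r\<^sup>2 / 2))"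
      by (simp add: ennreal_plus[symmetric] del: ennreal_plus)
    finally show "(\<integral>\<^sup>+ y. indicator B (x(t := y)) \<partial>?G) \<le> ennreal (2 * exp (- r\<^sup>2 / 2))" .
  qed
  also have "\<dots> = ennreal (2 * exp (- r\<^sup>2 / 2))"
  proof -
    interpret PI: prob_space "PiM I (\<lambda>_. ?G)" by (rule prob_space_PiM) (rule prob_space_std_gauss)
    show ?thesis by (simp add: PI.emeasure_space_1)
  qed
  finally show ?thesis by (simp add: N_def B_def V_def)
qed



lemma row_eq: "row l (M :: real^'d^'n) = M $ l"
  by (simp add: row_def vec_eq_iff)

lemma outer_nth: "outer v u $ l = v $ l *\<^sub>R u"
  by (simp add: outer_def vec_eq_iff)

lemma row_norm_sq:
  fixes Q :: "((real^'d) \<times> (real^'n)) list \<Rightarrow> (real^'n) \<times> (real^'d)"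
    and Out :: "((real^'d) \<times> (real^'n)) list \<Rightarrow> real^'d"
    and Usel :: "(real^'d) list \<Rightarrow> real^'d"
    and Msel :: "(real^'n) list \<Rightarrow> (real^'n) list"
  assumes dim: "CARD('d) \<ge> 2 * T + 2"
    and Usel: "\<And>L. length L < CARD('d) \<Longrightarrow> norm (Usel L) = 1 \<and> (\<forall>x\<in>set L. x \<bullet> Usel L = 0)"
  shows "(norm (row l (final_A Q Out Usel Msel a b T xi)))\<^sup>2 =
     (\<Sum>j<T. (cs_vs (crun Q Usel Msel a b xi j) ! j $ l - cs_vs (crun Q Usel Msel a b xi (Suc j)) ! (Suc j) $ l)\<^sup>2)
     + (cs_vs (crun Q Usel Msel a b xi T) ! T $ l)\<^sup>2"
proof -
  define s where "s = crun Q Usel Msel a b xi T"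
  define us where "us = cs_us s"
  define vs where "vs = cs_vs s"
  define L where "L = cs_us s @ cs_ws s @ [Out (cs_resp s)]"
  define u where "u = Usel L"
  define E where "E = us @ [u]"
  have lus: "length us = T" and lvs: "length vs = Suc T" and lws: "length (cs_ws s) = T"
    using crun_lengths[of Q Usel Msel a b xi T] by (simp_all add: us_def vs_def s_def)
  have "length L < CARD('d)" using dim lus lws by (simp add: L_def us_def)
  then have uL: "norm u = 1 \<and> (\<forall>x\<in>set L. x \<bullet> u = 0)" unfolding u_def by (rule Usel)
  have d2: "2 * T \<le> CARD('d)" using dim by linarith
  have ous: "orthonormal_list us" unfolding us_def s_def
    by (rule crun_us_orth[OF Usel d2])
  have oE: "orthonormal_list E" unfolding E_def
    by (rule orthonormal_snoc[OF ous]) (use uL in \<open>auto simp: L_def us_def\<close>)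
  have lE: "length E = Suc T" using lus by (simp add: E_def)
  define c where "c j = (if j < T then vs ! j $ l - vs ! Suc j $ l else vs ! T $ l)" for j
  have "row l (final_A Q Out Usel Msel a b T xi) = (\<Sum>j<Suc T. c j *\<^sub>R E ! j)"
  proof -
    have "row l (final_A Q Out Usel Msel a b T xi) = Apart vs us T $ l + vs ! T $ l *\<^sub>R u"
      unfolding final_A_def Let_def s_def[symmetric] row_eq
      by (simp add: vs_def us_def u_def L_def outer_nth)
    also have "Apart vs us T $ l = (\<Sum>j<T. c j *\<^sub>R E ! j)"
      unfolding Apart_def sum_component outer_nth sum_shift1
      by (intro sum.cong refl) (simp add: c_def E_def nth_append lus)
    also have "vs ! T $ l *\<^sub>R u = c T *\<^sub>R E ! T" by (simp add: c_def E_def nth_append lus)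
    finally show ?thesis by simp
  qed
  then have "(norm (row l (final_A Q Out Usel Msel a b T xi)))\<^sup>2 = (\<Sum>j<Suc T. (c j)\<^sup>2)"
    by (simp only: norm_orth_sum[OF oE lE])
  also have "\<dots> = (\<Sum>j<T. (vs ! j $ l - vs ! Suc j $ l)\<^sup>2) + (vs ! T $ l)\<^sup>2"
    by (simp add: c_def)
  also have "vs ! T = cs_vs (crun Q Usel Msel a b xi T) ! T" by (simp add: vs_def s_def)
  also have "(\<Sum>j<T. (vs ! j $ l - vs ! Suc j $ l)\<^sup>2) =
     (\<Sum>j<T. (cs_vs (crun Q Usel Msel a b xi j) ! j $ l - cs_vs (crun Q Usel Msel a b xi (Suc j)) ! (Suc j) $ l)\<^sup>2)"
  proof (intro sum.cong refl)
    fix j assume "j \<in> {..<T}"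
    then have "j \<le> T" "Suc j \<le> T" by auto
    then show "(vs ! j $ l - vs ! Suc j $ l)\<^sup>2 =
     (cs_vs (crun Q Usel Msel a b xi j) ! j $ l - cs_vs (crun Q Usel Msel a b xi (Suc j)) ! (Suc j) $ l)\<^sup>2"
      unfolding vs_def s_def by (simp only: crun_vs_prefix[OF \<open>j \<le> T\<close>] crun_vs_prefix[OF \<open>Suc j \<le> T\<close>])
  qed
  finally show ?thesis .
qed



theorem mainTheorem4:
  fixes T :: nat and \<alpha> \<beta> \<delta> :: real
    and Q :: "((real^'d) \<times> (real^'n)) list \<Rightarrow> (real^'n) \<times> (real^'d)"
    and Out :: "((real^'d) \<times> (real^'n)) list \<Rightarrow> real^'d"
    and Usel :: "(real^'d) list \<Rightarrow> real^'d"
    and Msel :: "(real^'n) list \<Rightarrow> (real^'n) list"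
  assumes "T \<ge> 1" and "CARD('n) \<ge> 2 * T + 1" and "CARD('d) \<ge> 2 * T + 2"
    and "\<alpha> > 0" and "\<beta> > 0"
    and Usel: "\<And>L. length L < CARD('d) \<Longrightarrow>
                 norm (Usel L) = 1 \<and> (\<forall>x\<in>set L. x \<bullet> Usel L = 0)"
    and Msel: "\<And>L. orthonormal_list (Msel L) \<and> span (set (Msel L)) = span (set L)"
    and meas: "\<And>t. t \<in> {1..T} \<Longrightarrow>
                 (\<lambda>xi. cs_vs (crun Q Usel Msel \<alpha> \<beta> xi t) ! t)
                   \<in> borel_measurable (PiM {1..T} (\<lambda>_. std_gauss :: (real^'n) measure))"
    and "0 < \<delta>" and "\<delta> < 1"
    and "2 * \<alpha>\<^sup>2 + 8 * real T * ln (2 * real T * real CARD('n) / \<delta>) * \<beta>\<^sup>2 \<le> 1"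
  shows "measure (PiM {1..T} (\<lambda>_. std_gauss :: (real^'n) measure))
           {xi \<in> space (PiM {1..T} (\<lambda>_. std_gauss :: (real^'n) measure)).
              (MAX l. norm (row l (final_A Q Out Usel Msel \<alpha> \<beta> T xi))) \<le> 1}
         \<ge> 1 - \<delta>"
proof -
  note T1 = assms(1) and dimn = assms(2) and dimd = assms(3) and apos = assms(4) and bpos = assms(5)
    and dpos = assms(9) and dl1 = assms(10) and hyp = assms(11)
  let ?G = "std_gauss :: (real^'n) measure"
  define N where "N = PiM {1..T} (\<lambda>_. ?G)"
  interpret N: prob_space N unfolding N_def by (rule prob_space_PiM) (rule prob_space_std_gauss)
  define V where "V t xi = cs_vs (crun Q Usel Msel \<alpha> \<beta> xi t) ! t" for t xi
  define n where "n = CARD('n)"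
  define Lg where "Lg = ln (2 * real T * real n / \<delta>)"
  have "1 < 2 * real T * real n / \<delta>"
  proof -
    have "1 \<le> real T" "3 \<le> real n" using T1 dimn by (auto simp: n_def)
    then have "1 * 3 \<le> real T * real n" by (intro mult_mono) auto
    then have "1 < 2 * real T * real n" by simp
    then show ?thesis using dpos dl1 by (simp add: field_simps)
  qed
  then have Lpos: "Lg > 0" by (simp add: Lg_def)
  define r where "r = sqrt (2 * Lg)"
  have r0: "r \<ge> 0" and r2: "r\<^sup>2 = 2 * Lg" using Lpos by (auto simp: r_def)
  define F where "F l xi = (\<Sum>j<T. (V j xi $ l - V (Suc j) xi $ l)\<^sup>2) + (V T xi $ l)\<^sup>2" for l xi
  have VM: "V t \<in> borel_measurable N" if "t \<le> T" for t
  proof (cases "t = 0")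
    case True
    have "V 0 = (\<lambda>_. \<alpha> *\<^sub>R 1)" by (simp add: V_def fun_eq_iff)
    then show ?thesis using True by simp
  next
    case False
    then have "t \<in> {1..T}" using that by auto
    from meas[OF this] show ?thesis by (simp add: V_def[abs_def] N_def)
  qed
  have VL: "(\<lambda>xi. V t xi $ l) \<in> borel_measurable N" if "t \<le> T" for t l
    using measurable_compose[OF VM[OF that] vec_nth_meas] .
  have FM[measurable]: "F l \<in> borel_measurable N" for l
    unfolding F_def[abs_def]
    by (intro borel_measurable_add borel_measurable_sum borel_measurable_power borel_measurable_diff VL) auto
  let ?P = "{1..T} \<times> (UNIV :: 'n set)"
  define B where "B p = {xi \<in> space N. \<beta> * r \<le> \<bar>V (fst p) xi $ snd p\<bar>}" for p :: "nat \<times> 'n"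
  have Bsets: "B p \<in> sets N" if "p \<in> ?P" for p
  proof -
    have [measurable]: "(\<lambda>xi. V (fst p) xi $ snd p) \<in> borel_measurable N" using that by (intro VL) auto
    show ?thesis unfolding B_def by measurable
  qed
  have Bprob: "N.prob (B p) \<le> \<delta> / (real T * real n)" if "p \<in> ?P" for p
  proof -
    have "emeasure N (B p) \<le> ennreal (2 * exp (- r\<^sup>2 / 2))"
      unfolding B_def N_def V_def
      by (rule tail_step) (use that Msel meas bpos r0 in auto)
    also have "2 * exp (- r\<^sup>2 / 2) = \<delta> / (real T * real n)"
    proof -
      have "exp (- r\<^sup>2 / 2) = exp (- Lg)" using r2 by simp
      also have "\<dots> = inverse (2 * real T * real n / \<delta>)"
        using \<open>1 < 2 * real T * real n / \<delta>\<close> by (simp add: Lg_def exp_minus)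
      finally show ?thesis by (simp add: field_simps)
    qed
    finally have "emeasure N (B p) \<le> ennreal (\<delta> / (real T * real n))" .
    then show ?thesis using dpos by (simp add: N.emeasure_eq_measure ennreal_le_iff)
  qed
  define Tg where "Tg = {xi \<in> space N. \<forall>l. F l xi \<le> 1}"
  have Tgm: "Tg \<in> sets N" unfolding Tg_def by measurable
  have target: "{xi \<in> space N. (MAX l. norm (row l (final_A Q Out Usel Msel \<alpha> \<beta> T xi))) \<le> 1} = Tg"
  proof -
    have "(MAX l. norm (row l (final_A Q Out Usel Msel \<alpha> \<beta> T xi))) \<le> 1 \<longleftrightarrow> (\<forall>l. F l xi \<le> 1)" for xi
    proof -
      have "(MAX l. norm (row l (final_A Q Out Usel Msel \<alpha> \<beta> T xi))) \<le> 1 \<longleftrightarrow>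
            (\<forall>l. norm (row l (final_A Q Out Usel Msel \<alpha> \<beta> T xi)) \<le> 1)"
        by (subst Max_le_iff) auto
      also have "\<dots> \<longleftrightarrow> (\<forall>l. (norm (row l (final_A Q Out Usel Msel \<alpha> \<beta> T xi)))\<^sup>2 \<le> 1)"
        by (simp add: power_le_one_iff)
      also have "\<dots> \<longleftrightarrow> (\<forall>l. F l xi \<le> 1)"
        by (simp only: row_norm_sq[OF dimd Usel] F_def V_def)
      finally show ?thesis .
    qed
    then show ?thesis by (auto simp: Tg_def)
  qed
  have good: "space N - (\<Union>p\<in>?P. B p) \<subseteq> Tg"
  proof
    fix xi assume xi: "xi \<in> space N - (\<Union>p\<in>?P. B p)"
    have small: "\<bar>V t xi $ l\<bar> < \<beta> * r" if "t \<in> {1..T}" for t l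
      using xi that by (auto simp: B_def not_le)
    show "xi \<in> Tg" unfolding Tg_def
    proof (safe)
      show "xi \<in> space N" using xi by auto
      fix l
      define a where "a j = V j xi $ l" for j
      have a0: "a 0 = \<alpha>" by (simp add: a_def V_def)
      have asq: "(a j)\<^sup>2 \<le> (\<beta> * r)\<^sup>2" if "j \<in> {1..T}" for j
      proof -
        have "\<bar>a j\<bar> \<le> \<beta> * r" using small[OF that, of l] by (simp add: a_def)
        then have "\<bar>a j\<bar>\<^sup>2 \<le> (\<beta> * r)\<^sup>2" by (intro power_mono) auto
        then show ?thesis by simp
      qed
      have "(\<Sum>j\<in>{1..T}. (a j)\<^sup>2) \<le> real (card {1..T}) * (\<beta> * r)\<^sup>2"
        by (rule sum_bounded_above) (rule asq)
      then have S: "(\<Sum>j\<in>{1..T}. (a j)\<^sup>2) \<le> real T * (\<beta> * r)\<^sup>2" by simp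
      have "F l xi \<le> (\<Sum>j<T. (a j - a (Suc j))\<^sup>2) + (a T)\<^sup>2 + (a T)\<^sup>2"
        by (simp add: F_def a_def)
      also have "\<dots> \<le> 2 * (a 0)\<^sup>2 + 4 * (\<Sum>j\<in>{1..T}. (a j)\<^sup>2)" by (rule diff_sq_bound)
      also have "\<dots> \<le> 2 * \<alpha>\<^sup>2 + 4 * (real T * (\<beta> * r)\<^sup>2)" using S a0 by simp
      also have "\<dots> = 2 * \<alpha>\<^sup>2 + 8 * real T * Lg * \<beta>\<^sup>2"
        using r2 by (simp add: power_mult_distrib)
      also have "\<dots> \<le> 1" using hyp by (simp add: Lg_def n_def)
      finally show "F l xi \<le> 1" .
    qed
  qed
  have Um: "(\<Union>p\<in>?P. B p) \<in> sets N" using Bsets by (intro sets.finite_UN) auto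
  have "N.prob (\<Union>p\<in>?P. B p) \<le> (\<Sum>p\<in>?P. N.prob (B p))"
    using Bsets by (intro N.finite_measure_subadditive_finite) auto
  also have "\<dots> \<le> real (card ?P) * (\<delta> / (real T * real n))"
    by (rule sum_bounded_above) (rule Bprob)
  also have "\<dots> = \<delta>"
    using T1 dimn by (simp add: card_cartesian_product n_def field_simps)
  finally have U: "N.prob (\<Union>p\<in>?P. B p) \<le> \<delta>" .
  have "1 - \<delta> \<le> N.prob (space N - (\<Union>p\<in>?P. B p))"
    using U Um by (simp add: N.prob_compl)
  also have "\<dots> \<le> N.prob Tg"
    using good Tgm by (intro N.finite_measure_mono) auto
  finally show ?thesis using target by (simp add: N_def)
qed
end
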